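(* Let $D$ be a link diagram and $\Gamma$ its associated fat-vertex graph. Then $\omega(\Gamma)\geq\omega(D)$.
   Context: Wirtinger number of a diagram: view $D$ (with $n$ crossings) as a union of $n$ strands (arcs between undercrossings); two strands are adjacent if they are the two under-strands at some crossing. A partial coloring is a nonempty subset $A$ of the set $S(D)$ of strands. A coloring move $A_1\to A_2$ is allowed if $A_2\setminus A_1=\{s_j\}$ is a single strand and $s_j$ is adjacent to some $s_i\in A_1$ at a crossing whose over-strand $s_k$ lies in $A_1$. $D$ is $k$-colorable if there is a $k$-element set $A_0\subset S(D)$ and a sequence of $n-k$ coloring moves $A_0\to\cdots\to A_{n-k}=S(D)$; $\omega(D)$ is the least such $k$. Fat-vertex graph: from $D$ and a checkerboard spanning surface $F$ (a union of disks and twisted bands), form the planar graph whose vertices are the disks of $F$, drawn as disjoint closed disks ("fat vertices"), and whose edges are the cores of the bands. A segment of $\Gamma$ is either an edge or a connected arc of $\partial v\setminus\{\text{endpoints of edges}\}$ for a fat vertex $v$; let $S(\Gamma)$ be the set of segments ($m$ elements) and $e(\Gamma)$ the set of edges. For $A_1\subset A_2\subset S(\Gamma)$ with $A_2\setminus A_1=\{s\}$, a coloring move $A_1\to A_2$ is allowed if either (1) $s$ is an edge and both boundary segments adjacent to $s$ at one of its (same) vertex are in $A_1$, or (2) $s$ is an arc in the boundary of a fat vertex and is incident to an edge in $A_1$. $\Gamma$ is $k$-colorable if there is a $k$-element set $A_0\subset S(\Gamma)\setminus e(\Gamma)$ and a sequence of $m-k$ coloring moves ending at $S(\Gamma)$;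 $\omega(\Gamma)$ is the least such $k$. *)

theory Defs
  imports "HOL-Combinatorics.Permutations"
begin

text \<open>A link diagram with n >= 1 crossings whose projection is connected is encoded
  as a 4-valent combinatorial map on a finite set H of darts (half-edges):
  sigma rotates the four darts around each crossing (cyclic order in the plane),
  alpha is the fixed-point-free involution pairing the two ends of each edge of the
  projection; faces are the orbits of sigma o alpha.  Planarity (embedding in the
  sphere) is the Euler condition V - E + F = 2 for the connected map.  The crossing
  information is the set Ov of over-darts: at each crossing exactly one of the two
  pairs of opposite darts {h, sigma^2 h} is the over-strand.\<close>

definition orb :: "('a \<Rightarrow> 'a) \<Rightarrow> 'a \<Rightarrow> 'a set" where
  "orb f x = {(f ^^ k) x | k. True}"

definition map_vertices :: "'h set \<Rightarrow> ('h \<Rightarrow> 'h) \<Rightarrow> 'h set set" where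
  "map_vertices H \<sigma> = orb \<sigma> ` H"

definition map_edges :: "'h set \<Rightarrow> ('h \<Rightarrow> 'h) \<Rightarrow> 'h set set" where
  "map_edges H \<alpha> = orb \<alpha> ` H"

definition map_faces :: "'h set \<Rightarrow> ('h \<Rightarrow> 'h) \<Rightarrow> ('h \<Rightarrow> 'h) \<Rightarrow> 'h set set" where
  "map_faces H \<sigma> \<alpha> = orb (\<sigma> \<circ> \<alpha>) ` H"

definition map_connected :: "'h set \<Rightarrow> ('h \<Rightarrow> 'h) \<Rightarrow> ('h \<Rightarrow> 'h) \<Rightarrow> bool" where
  "map_connected H \<sigma> \<alpha> \<longleftrightarrow>
     (\<forall>g\<in>H. \<forall>h\<in>H. (g, h) \<in> ({(x, \<sigma> x) | x. x \<in> H} \<union> {(x, \<alpha> x) | x. x \<in> H})\<^sup>*)"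

definition link_diagram :: "'h set \<Rightarrow> ('h \<Rightarrow> 'h) \<Rightarrow> ('h \<Rightarrow> 'h) \<Rightarrow> 'h set \<Rightarrow> bool" where
  "link_diagram H \<sigma> \<alpha> Ov \<longleftrightarrow>
     finite H \<and> H \<noteq> {} \<and>
     \<sigma> permutes H \<and> \<alpha> permutes H \<and>
     (\<forall>h\<in>H. \<alpha> h \<noteq> h \<and> \<alpha> (\<alpha> h) = h) \<and>
     (\<forall>h\<in>H. \<sigma> h \<noteq> h \<and> (\<sigma> ^^ 2) h \<noteq> h \<and> (\<sigma> ^^ 4) h = h) \<and>
     map_connected H \<sigma> \<alpha> \<and>
     int (card (map_vertices H \<sigma>)) - int (card (map_edges H \<alpha>))
       + int (card (map_faces H \<sigma> \<alpha>)) = 2 \<and>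
     Ov \<subseteq> H \<and>
     (\<forall>h\<in>H. (\<sigma> (\<sigma> h) \<in> Ov \<longleftrightarrow> h \<in> Ov) \<and> (\<sigma> h \<in> Ov \<longleftrightarrow> h \<notin> Ov))"

inductive reach :: "('s set \<Rightarrow> 's \<Rightarrow> bool) \<Rightarrow> 's set \<Rightarrow> 's set \<Rightarrow> bool"
  for mv :: "'s set \<Rightarrow> 's \<Rightarrow> bool" where
  refl: "reach mv A A"
| step: "reach mv A0 A \<Longrightarrow> s \<notin> A \<Longrightarrow> mv A s \<Longrightarrow> reach mv A0 (insert s A)"

text \<open>Strands: arcs between undercrossings.  Two darts lie on the same strand if they
  are joined by a chain of edges of the projection and over-passes
  (h, sigma^2 h with h an over-dart).\<close>

definition strand :: "'h set \<Rightarrow> ('h \<Rightarrow> 'h) \<Rightarrow> ('h \<Rightarrow> 'h) \<Rightarrow> 'h set \<Rightarrow> 'h \<Rightarrow> 'h set" where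
  "strand H \<sigma> \<alpha> Ov h =
     (let R = {(x, \<alpha> x) | x. x \<in> H} \<union> {(x, \<sigma> (\<sigma> x)) | x. x \<in> Ov}
      in {g. (h, g) \<in> (R \<union> R\<inverse>)\<^sup>*})"

definition strands :: "'h set \<Rightarrow> ('h \<Rightarrow> 'h) \<Rightarrow> ('h \<Rightarrow> 'h) \<Rightarrow> 'h set \<Rightarrow> 'h set set" where
  "strands H \<sigma> \<alpha> Ov = strand H \<sigma> \<alpha> Ov ` H"

text \<open>At the crossing with over-dart h the over-strand is the strand of h and the two
  under-strands are the strands of sigma h and sigma^3 h.\<close>

definition diagram_move :: "'h set \<Rightarrow> ('h \<Rightarrow> 'h) \<Rightarrow> ('h \<Rightarrow> 'h) \<Rightarrow> 'h set \<Rightarrow> 'h set set \<Rightarrow> 'h set \<Rightarrow> bool" where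
  "diagram_move H \<sigma> \<alpha> Ov A s \<longleftrightarrow>
     (\<exists>h\<in>Ov. strand H \<sigma> \<alpha> Ov h \<in> A \<and>
        ((strand H \<sigma> \<alpha> Ov (\<sigma> h) \<in> A \<and> s = strand H \<sigma> \<alpha> Ov (\<sigma> (\<sigma> (\<sigma> h)))) \<or>
         (strand H \<sigma> \<alpha> Ov (\<sigma> (\<sigma> (\<sigma> h))) \<in> A \<and> s = strand H \<sigma> \<alpha> Ov (\<sigma> h))))"

definition diagram_colorable :: "'h set \<Rightarrow> ('h \<Rightarrow> 'h) \<Rightarrow> ('h \<Rightarrow> 'h) \<Rightarrow> 'h set \<Rightarrow> nat \<Rightarrow> bool" where
  "diagram_colorable H \<sigma> \<alpha> Ov k \<longleftrightarrow>
     (\<exists>A0. A0 \<subseteq> strands H \<sigma> \<alpha> Ov \<and> A0 \<noteq> {} \<and> card A0 = k \<and>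
           reach (diagram_move H \<sigma> \<alpha> Ov) A0 (strands H \<sigma> \<alpha> Ov))"

definition wirtinger_diagram :: "'h set \<Rightarrow> ('h \<Rightarrow> 'h) \<Rightarrow> ('h \<Rightarrow> 'h) \<Rightarrow> 'h set \<Rightarrow> nat" where
  "wirtinger_diagram H \<sigma> \<alpha> Ov = (LEAST k. diagram_colorable H \<sigma> \<alpha> Ov k)"

text \<open>An abstract fat-vertex graph is given by its set of segments Seg, the subset Eg of
  segments that are edges, the relation ends e a b (a, b are the two boundary segments
  adjacent to the edge e at one of its ends), and the incidence relation inc a e
  (boundary arc a is incident to edge e).\<close>

definition fat_move :: "'s set \<Rightarrow> 's set \<Rightarrow> ('s \<Rightarrow> 's \<Rightarrow> 's \<Rightarrow> bool) \<Rightarrow> ('s \<Rightarrow> 's \<Rightarrow> bool)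
    \<Rightarrow> 's set \<Rightarrow> 's \<Rightarrow> bool" where
  "fat_move Seg Eg ends inc A s \<longleftrightarrow>
     (s \<in> Eg \<and> (\<exists>a b. ends s a b \<and> a \<in> A \<and> b \<in> A)) \<or>
     (s \<in> Seg - Eg \<and> (\<exists>e\<in>Eg. inc s e \<and> e \<in> A))"

definition fat_colorable :: "'s set \<Rightarrow> 's set \<Rightarrow> ('s \<Rightarrow> 's \<Rightarrow> 's \<Rightarrow> bool) \<Rightarrow> ('s \<Rightarrow> 's \<Rightarrow> bool)
    \<Rightarrow> nat \<Rightarrow> bool" where
  "fat_colorable Seg Eg ends inc k \<longleftrightarrow>
     (\<exists>A0. A0 \<subseteq> Seg - Eg \<and> card A0 = k \<and> reach (fat_move Seg Eg ends inc) A0 Seg)"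

definition wirtinger_fat :: "'s set \<Rightarrow> 's set \<Rightarrow> ('s \<Rightarrow> 's \<Rightarrow> 's \<Rightarrow> bool) \<Rightarrow> ('s \<Rightarrow> 's \<Rightarrow> bool) \<Rightarrow> nat" where
  "wirtinger_fat Seg Eg ends inc = (LEAST k. fat_colorable Seg Eg ends inc k)"

text \<open>A checkerboard shading is a set Sh of darts, a union of faces (orbits of
  sigma o alpha), such that the two sides of every edge have different shading
  (the face of h lies on one side of the edge {h, alpha h}, the face of alpha h on the
  other).  The corner between darts d and sigma d belongs to the face of sigma d.
  The checkerboard surface consists of the shaded faces (disks = fat vertices) and one
  twisted band per crossing joining its two shaded corners.  Hence the segments of
  the fat-vertex graph are: one edge per crossing (Inl v) and one boundary arc per
  edge of the projection (Inr e), since each projection edge lies on the boundary of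
  exactly one shaded face, between the band attachments at its two end crossings.\<close>

definition checkerboard :: "'h set \<Rightarrow> ('h \<Rightarrow> 'h) \<Rightarrow> ('h \<Rightarrow> 'h) \<Rightarrow> 'h set \<Rightarrow> bool" where
  "checkerboard H \<sigma> \<alpha> Sh \<longleftrightarrow>
     Sh \<subseteq> H \<and> (\<forall>h\<in>H. (\<sigma> (\<alpha> h) \<in> Sh \<longleftrightarrow> h \<in> Sh) \<and> (\<alpha> h \<in> Sh \<longleftrightarrow> h \<notin> Sh))"

definition fvg_segments :: "'h set \<Rightarrow> ('h \<Rightarrow> 'h) \<Rightarrow> ('h \<Rightarrow> 'h) \<Rightarrow> ('h set + 'h set) set" where
  "fvg_segments H \<sigma> \<alpha> = Inl ` map_vertices H \<sigma> \<union> Inr ` map_edges H \<alpha>"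

definition fvg_edges :: "'h set \<Rightarrow> ('h \<Rightarrow> 'h) \<Rightarrow> ('h set + 'h set) set" where
  "fvg_edges H \<sigma> = Inl ` map_vertices H \<sigma>"

definition fvg_ends :: "'h set \<Rightarrow> ('h \<Rightarrow> 'h) \<Rightarrow> ('h \<Rightarrow> 'h) \<Rightarrow> 'h set
    \<Rightarrow> ('h set + 'h set) \<Rightarrow> ('h set + 'h set) \<Rightarrow> ('h set + 'h set) \<Rightarrow> bool" where
  "fvg_ends H \<sigma> \<alpha> Sh s a b \<longleftrightarrow>
     (\<exists>d\<in>H. s = Inl (orb \<sigma> d) \<and> \<sigma> d \<in> Sh \<and>
            a = Inr (orb \<alpha> d) \<and> b = Inr (orb \<alpha> (\<sigma> d)))"

definition fvg_inc :: "('h set + 'h set) \<Rightarrow> ('h set + 'h set) \<Rightarrow> bool" where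
  "fvg_inc a e \<longleftrightarrow> (\<exists>x v. a = Inr x \<and> e = Inl v \<and> x \<inter> v \<noteq> {})"

definition wirtinger_fvg :: "'h set \<Rightarrow> ('h \<Rightarrow> 'h) \<Rightarrow> ('h \<Rightarrow> 'h) \<Rightarrow> 'h set \<Rightarrow> nat" where
  "wirtinger_fvg H \<sigma> \<alpha> Sh =
     wirtinger_fat (fvg_segments H \<sigma> \<alpha>) (fvg_edges H \<sigma>) (fvg_ends H \<sigma> \<alpha> Sh) fvg_inc"

end

theory Submission
  imports Defs
begin

lemma orb_self: "h \<in> orb f h"
  unfolding orb_def by (rule CollectI, rule exI[of _ 0]) simp

lemma orb_app: "(f ^^ k) h \<in> orb f h"
  unfolding orb_def by blast

lemma orb_in: assumes "\<forall>x\<in>H. f x \<in> H" "h \<in> H" shows "orb f h \<subseteq> H"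
proof -
  have "(f ^^ k) h \<in> H" for k by (induction k) (use assms in auto)
  then show ?thesis unfolding orb_def by auto
qed

lemma orb_inv: assumes "f (f h) = h" shows "orb f h \<subseteq> {h, f h}"
proof -
  have "(f ^^ k) h \<in> {h, f h}" for k by (induction k) (use assms in auto)
  then show ?thesis unfolding orb_def by auto
qed

lemma orb4: assumes "f (f (f (f h))) = h" shows "orb f h \<subseteq> {h, f h, f (f h), f (f (f h))}"
proof -
  have "(f ^^ k) h \<in> {h, f h, f (f h), f (f (f h))}" for k by (induction k) (use assms in auto)
  then show ?thesis unfolding orb_def by auto
qed

lemma orb_shift: assumes "f (f (f (f h))) = h" shows "orb f (f h) = orb f h"
proof
  have "(f ^^ k) (f h) = (f ^^ (Suc k)) h" for k by (simp only: funpow_Suc_right comp_apply)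
  then show "orb f (f h) \<subseteq> orb f h" unfolding orb_def by blast
next
  have a: "(f ^^ 0) (f h) = f h" "(f ^^ 1) (f h) = f (f h)" "(f ^^ 2) (f h) = f (f (f h))"
     "(f ^^ 3) (f h) = h" using assms by (auto simp: eval_nat_numeral)
  have "{h, f h, f (f h), f (f (f h))} \<subseteq> orb f (f h)" unfolding orb_def
    using a by (smt (verit, best) empty_subsetI insert_subset mem_Collect_eq)
  then show "orb f h \<subseteq> orb f (f h)" using orb4[of f h, OF assms] by blast
qed

lemma strand_sym:
  assumes "(h, h') \<in> S" "sym S"
  shows "{g. (h, g) \<in> S\<^sup>*} = {g. (h', g) \<in> S\<^sup>*}"
proof -
  have "(h', h) \<in> S" using assms by (meson symD)
  then show ?thesis using assms(1)
    by (auto intro: converse_rtrancl_into_rtrancl)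
qed

lemma strand_R:
  assumes "(h, h') \<in> {(x, \<alpha> x) | x. x \<in> H} \<union> {(x, \<sigma> (\<sigma> x)) | x. x \<in> Ov}"
  shows "strand H \<sigma> \<alpha> Ov h' = strand H \<sigma> \<alpha> Ov h"
  unfolding strand_def Let_def
  by (rule strand_sym[symmetric]) (use assms in \<open>auto simp: sym_Un_converse\<close>)

lemma strand_alpha: "h \<in> H \<Longrightarrow> strand H \<sigma> \<alpha> Ov (\<alpha> h) = strand H \<sigma> \<alpha> Ov h"
  by (rule strand_R) auto

lemma strand_over: "h \<in> Ov \<Longrightarrow> strand H \<sigma> \<alpha> Ov (\<sigma> (\<sigma> h)) = strand H \<sigma> \<alpha> Ov h"
  by (rule strand_R) auto

lemma LD_facts:
  assumes "link_diagram H \<sigma> \<alpha> Ov"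
  shows "finite H" "H \<noteq> {}" "\<forall>h\<in>H. \<sigma> h \<in> H" "\<forall>h\<in>H. \<alpha> h \<in> H"
    "\<forall>h\<in>H. \<alpha> (\<alpha> h) = h" "\<forall>h\<in>H. \<sigma> (\<sigma> (\<sigma> (\<sigma> h))) = h"
    "\<forall>h\<in>H. \<sigma> h \<in> Ov \<longleftrightarrow> h \<notin> Ov" "Ov \<subseteq> H"
  using assms unfolding link_diagram_def
  by (auto simp: permutes_in_image eval_nat_numeral)

lemma reach_insert: "reach mv X Y \<Longrightarrow> (t \<notin> Y \<Longrightarrow> mv Y t) \<Longrightarrow> reach mv X (insert t Y)"
  by (cases "t \<in> Y") (auto simp: insert_absorb intro: reach.step)

lemma reach_empty: "reach mv A0 A \<Longrightarrow> A0 = {} \<Longrightarrow> (\<forall>s. \<not> mv {} s) \<Longrightarrow> A = {}"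
  by (induction rule: reach.induct) auto

lemma reach_add:
  assumes "finite F" "\<forall>s\<in>F. \<forall>A. A0 \<subseteq> A \<longrightarrow> mv A s"
  shows "reach mv A0 (A0 \<union> F)"
  using assms
proof (induction F rule: finite_induct)
  case empty then show ?case by (simp add: reach.refl)
next
  case (insert x F)
  then have "reach mv A0 (insert x (A0 \<union> F))"
    by (intro reach_insert) auto
  then show ?case by simp
qed

definition Bset :: "'h set \<Rightarrow> ('h \<Rightarrow> 'h) \<Rightarrow> ('h \<Rightarrow> 'h) \<Rightarrow> 'h set \<Rightarrow> ('h set + 'h set) set \<Rightarrow> 'h set set" where
  "Bset H \<sigma> \<alpha> Ov A = {strand H \<sigma> \<alpha> Ov g | g. g \<in> H \<and>
     ((\<exists>v. Inl v \<in> A \<and> g \<in> v) \<or> (\<exists>x. Inr x \<in> A \<and> g \<in> x))}"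

lemma Bset_Inr: "g \<in> H \<Longrightarrow> Inr x \<in> A \<Longrightarrow> g \<in> x \<Longrightarrow> strand H \<sigma> \<alpha> Ov g \<in> Bset H \<sigma> \<alpha> Ov A"
  unfolding Bset_def by blast

lemma Bset_Inl: "g \<in> H \<Longrightarrow> Inl x \<in> A \<Longrightarrow> g \<in> x \<Longrightarrow> strand H \<sigma> \<alpha> Ov g \<in> Bset H \<sigma> \<alpha> Ov A"
  unfolding Bset_def by blast

lemma ne_setI: "x \<in> S \<Longrightarrow> S \<noteq> {}" by blast

lemma Bset_E: "z \<in> Bset H \<sigma> \<alpha> Ov A \<Longrightarrow> (\<And>g. z = strand H \<sigma> \<alpha> Ov g \<Longrightarrow> g \<in> H \<Longrightarrow> P) \<Longrightarrow> P"
  unfolding Bset_def by blast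

lemma Bset_mono: "A \<subseteq> A' \<Longrightarrow> Bset H \<sigma> \<alpha> Ov A \<subseteq> Bset H \<sigma> \<alpha> Ov A'"
  unfolding Bset_def by blast

lemma main:
  assumes LD: "link_diagram H \<sigma> \<alpha> Ov"
  and r: "reach (fat_move (fvg_segments H \<sigma> \<alpha>) (fvg_edges H \<sigma>) (fvg_ends H \<sigma> \<alpha> Sh) fvg_inc) A0 A"
  shows "reach (diagram_move H \<sigma> \<alpha> Ov) (Bset H \<sigma> \<alpha> Ov A0) (Bset H \<sigma> \<alpha> Ov A)"
  using r
proof induction
  case refl show ?case by (rule reach.refl)
next
  case (step X A s)
  note F = LD_facts[OF LD]
  let ?B = "Bset H \<sigma> \<alpha> Ov"
  let ?st = "strand H \<sigma> \<alpha> Ov"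
  from step.hyps(3) consider
      (E) "s \<in> fvg_edges H \<sigma>" "\<exists>a b. fvg_ends H \<sigma> \<alpha> Sh s a b \<and> a \<in> A \<and> b \<in> A"
    | (S) "s \<in> fvg_segments H \<sigma> \<alpha> - fvg_edges H \<sigma>" "\<exists>e\<in>fvg_edges H \<sigma>. fvg_inc s e \<and> e \<in> A"
    unfolding fat_move_def by blast
  then show ?case
  proof cases
    case E
    then obtain d where d: "d \<in> H" "s = Inl (orb \<sigma> d)" "Inr (orb \<alpha> d) \<in> A"
      "Inr (orb \<alpha> (\<sigma> d)) \<in> A" unfolding fvg_ends_def by blast
    have H1: "\<sigma> d \<in> H" "\<sigma> (\<sigma> d) \<in> H" "\<sigma> (\<sigma> (\<sigma> d)) \<in> H" using F d by auto
    have s4: "\<sigma> (\<sigma> (\<sigma> (\<sigma> d))) = d" using F d by auto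
    have b1: "?st d \<in> ?B A" by (rule Bset_Inr[OF d(1) d(3) orb_self])
    have b2: "?st (\<sigma> d) \<in> ?B A" by (rule Bset_Inr[OF H1(1) d(4) orb_self])
    define t where "t = (if d \<in> Ov then ?st (\<sigma> (\<sigma> (\<sigma> d))) else ?st (\<sigma> (\<sigma> d)))"
    have c2: "?st (\<sigma> (\<sigma> d)) \<in> insert t (?B A)"
    proof (cases "d \<in> Ov")
      case True then show ?thesis using b1 strand_over[of d] by simp
    next
      case False then show ?thesis unfolding t_def by simp
    qed
    have c3: "?st (\<sigma> (\<sigma> (\<sigma> d))) \<in> insert t (?B A)"
    proof (cases "d \<in> Ov")
      case True then show ?thesis unfolding t_def by simp
    next
      case False
      then have "\<sigma> d \<in> Ov" using F d by auto
      then show ?thesis using b2 strand_over[of "\<sigma> d"] by auto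
    qed
    have eq: "?B (insert s A) = insert t (?B A)"
    proof
      show "?B (insert s A) \<subseteq> insert t (?B A)"
      proof
        fix y assume "y \<in> ?B (insert s A)"
        then obtain g where g: "y = ?st g" "g \<in> H"
          "(\<exists>v. Inl v \<in> insert s A \<and> g \<in> v) \<or> (\<exists>x. Inr x \<in> insert s A \<and> g \<in> x)"
          unfolding Bset_def by blast
        show "y \<in> insert t (?B A)"
        proof (cases "g \<in> orb \<sigma> d")
          case True
          then have "g \<in> {d, \<sigma> d, \<sigma> (\<sigma> d), \<sigma> (\<sigma> (\<sigma> d))}" using orb4[of \<sigma> d, OF s4] by blast
          then show ?thesis using g b1 b2 c2 c3 by auto
        next
          case False
          then have "y \<in> ?B A" using g d unfolding Bset_def by blast
          then show ?thesis by simp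
        qed
      qed
    next
      have m2: "\<sigma> (\<sigma> d) \<in> orb \<sigma> d" using orb_app[of 2 \<sigma> d] by (simp add: eval_nat_numeral)
      have m3: "\<sigma> (\<sigma> (\<sigma> d)) \<in> orb \<sigma> d" using orb_app[of 3 \<sigma> d] by (simp add: eval_nat_numeral)
      have "t \<in> ?B (insert s A)"
      proof (cases "d \<in> Ov")
        case True
        then show ?thesis unfolding t_def using Bset_Inl[OF H1(3) _ m3, of "insert s A"] d(2) by simp
      next
        case False
        then show ?thesis unfolding t_def using Bset_Inl[OF H1(2) _ m2, of "insert s A"] d(2) by simp
      qed
      then show "insert t (?B A) \<subseteq> ?B (insert s A)" using Bset_mono[of A "insert s A"] by blast
    qed
    have mv: "diagram_move H \<sigma> \<alpha> Ov (?B A) t"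
    proof (cases "d \<in> Ov")
      case True
      then show ?thesis unfolding diagram_move_def t_def using b1 b2 by auto
    next
      case False
      then have o: "\<sigma> d \<in> Ov" using F d by auto
      have "?st (\<sigma> (\<sigma> (\<sigma> (\<sigma> d)))) \<in> ?B A" using s4 b1 by simp
      then show ?thesis unfolding diagram_move_def t_def using False o b2 by auto
    qed
    show ?thesis using reach_insert[OF step.IH mv] eq by simp
  next
    case S
    then obtain x h0 v e where x: "s = Inr x" "x = orb \<alpha> h0" "h0 \<in> H"
      and e: "e = Inl v" "e \<in> A" "x \<inter> v \<noteq> {}"
      unfolding fvg_segments_def fvg_edges_def map_edges_def map_vertices_def fvg_inc_def
      by blast
    have a2: "\<alpha> (\<alpha> h0) = h0" using LD_facts(5)[OF LD] x by auto
    have xs: "x \<subseteq> {h0, \<alpha> h0}" using orb_inv[of \<alpha> h0, OF a2] x by simp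
    have xH: "x \<subseteq> H" using xs x LD_facts(4)[OF LD] by auto
    have sx: "g \<in> x \<Longrightarrow> strand H \<sigma> \<alpha> Ov g = strand H \<sigma> \<alpha> Ov h0" for g
      using xs strand_alpha[OF x(3)] by auto
    obtain y where y: "y \<in> x" "y \<in> v" using e by blast
    have yH: "y \<in> H" using y xH by blast
    have yB: "strand H \<sigma> \<alpha> Ov y \<in> ?B A" using Bset_Inl[OF yH _ y(2)] e by simp
    have "?B (insert s A) = ?B A"
    proof
      show "?B (insert s A) \<subseteq> ?B A"
      proof
        fix z assume "z \<in> ?B (insert s A)"
        then obtain g where g: "z = ?st g" "g \<in> H"
          "(\<exists>v. Inl v \<in> insert s A \<and> g \<in> v) \<or> (\<exists>x. Inr x \<in> insert s A \<and> g \<in> x)"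
          unfolding Bset_def by blast
        show "z \<in> ?B A"
        proof (cases "g \<in> x")
          case True
          then show ?thesis using g sx y yB by metis
        next
          case False
          then show ?thesis using g x unfolding Bset_def by blast
        qed
      qed
    qed (rule Bset_mono, blast)
    then show ?thesis using step.IH by simp
  qed
qed

theorem lemma4p4:
  fixes H :: "'h set" and \<sigma> \<alpha> :: "'h \<Rightarrow> 'h" and Ov Sh :: "'h set"
  assumes "link_diagram H \<sigma> \<alpha> Ov"
    and "checkerboard H \<sigma> \<alpha> Sh"
  shows "wirtinger_fvg H \<sigma> \<alpha> Sh \<ge> wirtinger_diagram H \<sigma> \<alpha> Ov"
proof -
  note F = LD_facts[OF assms(1)]
  let ?Seg = "fvg_segments H \<sigma> \<alpha>"
  let ?Eg = "fvg_edges H \<sigma>"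
  let ?fm = "fat_move ?Seg ?Eg (fvg_ends H \<sigma> \<alpha> Sh) fvg_inc"
  have finSeg: "finite ?Seg" using F(1)
    unfolding fvg_segments_def map_vertices_def map_edges_def by auto
  have finEg: "finite ?Eg" using F(1) unfolding fvg_edges_def map_vertices_def by auto
  have shalt: "\<forall>h\<in>H. \<sigma> h \<in> Sh \<longleftrightarrow> h \<notin> Sh"
  proof
    fix h assume h: "h \<in> H"
    have "\<alpha> h \<in> H" using F h by auto
    then have "\<sigma> (\<alpha> (\<alpha> h)) \<in> Sh \<longleftrightarrow> \<alpha> h \<in> Sh" using assms(2) unfolding checkerboard_def by blast
    moreover have "\<alpha> h \<in> Sh \<longleftrightarrow> h \<notin> Sh" using assms(2) h unfolding checkerboard_def by blast
    ultimately show "\<sigma> h \<in> Sh \<longleftrightarrow> h \<notin> Sh" using F h by auto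
  qed
  have ex: "fat_colorable ?Seg ?Eg (fvg_ends H \<sigma> \<alpha> Sh) fvg_inc (card (?Seg - ?Eg))"
    unfolding fat_colorable_def
  proof (intro exI conjI)
    have "reach ?fm (?Seg - ?Eg) ((?Seg - ?Eg) \<union> ?Eg)"
    proof (rule reach_add[OF finEg], intro ballI allI impI)
      fix s A assume s: "s \<in> ?Eg" and A: "?Seg - ?Eg \<subseteq> A"
      then obtain d where d: "d \<in> H" "s = Inl (orb \<sigma> d)" unfolding fvg_edges_def map_vertices_def by blast
      have s4: "\<sigma> (\<sigma> (\<sigma> (\<sigma> d))) = d" using F d by auto
      obtain d' where d': "d' \<in> H" "orb \<sigma> d' = orb \<sigma> d" "\<sigma> d' \<in> Sh"
      proof (cases "\<sigma> d \<in> Sh")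
        case True then show ?thesis using that d by blast
      next
        case False
        then have "\<sigma> (\<sigma> d) \<in> Sh" using shalt F d by auto
        then show ?thesis using that[of "\<sigma> d"] d F orb_shift[of \<sigma> d, OF s4] by auto
      qed
      have "\<sigma> d' \<in> H" using F d' by auto
      have gin: "Inr (orb \<alpha> g) \<in> ?Seg - ?Eg" if "g \<in> H" for g
        using that unfolding fvg_segments_def fvg_edges_def map_edges_def by auto
      have "Inr (orb \<alpha> d') \<in> A" "Inr (orb \<alpha> (\<sigma> d')) \<in> A"
        using A gin d'(1) \<open>\<sigma> d' \<in> H\<close> by auto
      then show "?fm A s" unfolding fat_move_def fvg_ends_def using s d d' by auto
    qed
    moreover have "(?Seg - ?Eg) \<union> ?Eg = ?Seg" unfolding fvg_segments_def fvg_edges_def by auto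
    ultimately show "reach ?fm (?Seg - ?Eg) ?Seg" by simp
  qed auto
  define w where "w = wirtinger_fvg H \<sigma> \<alpha> Sh"
  have "fat_colorable ?Seg ?Eg (fvg_ends H \<sigma> \<alpha> Sh) fvg_inc w"
    unfolding w_def wirtinger_fvg_def wirtinger_fat_def by (rule LeastI, rule ex)
  then obtain A0 where A0: "A0 \<subseteq> ?Seg - ?Eg" "card A0 = w" "reach ?fm A0 ?Seg"
    unfolding fat_colorable_def by blast
  let ?B = "Bset H \<sigma> \<alpha> Ov"
  let ?st = "strand H \<sigma> \<alpha> Ov"
  have finA0: "finite A0" using A0(1) finSeg by (meson finite_Diff finite_subset)
  have A0r: "\<forall>s\<in>A0. \<exists>y. y \<in> H \<and> s = Inr (orb \<alpha> y)"
    using A0(1) unfolding fvg_segments_def fvg_edges_def map_edges_def by auto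
  have noInl: "Inl v \<notin> A0" for v using A0(1) unfolding fvg_segments_def fvg_edges_def by auto
  define f where "f s = ?st (SOME y. y \<in> H \<and> s = Inr (orb \<alpha> y))" for s :: "'h set + 'h set"
  have Bsub: "?B A0 \<subseteq> f ` A0"
  proof
    fix z assume "z \<in> ?B A0"
    then obtain g where g0: "z = ?st g" "g \<in> H"
      "(\<exists>v. Inl v \<in> A0 \<and> g \<in> v) \<or> (\<exists>x. Inr x \<in> A0 \<and> g \<in> x)"
      unfolding Bset_def by blast
    then obtain x where g: "z = ?st g" "g \<in> H" "Inr x \<in> A0" "g \<in> x"
      using noInl by blast
    define y where "y = (SOME y. y \<in> H \<and> x = orb \<alpha> y)"
    have y: "y \<in> H \<and> x = orb \<alpha> y" unfolding y_def
    proof (rule someI_ex)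
      show "\<exists>y. y \<in> H \<and> x = orb \<alpha> y" using bspec[OF A0r g(3)] by simp
    qed
    then have "g \<in> {y, \<alpha> y}" using orb_inv[of \<alpha> y] F g by auto
    then have "?st g = ?st y" using strand_alpha[of y H] y by auto
    then have "z = f (Inr x)" unfolding f_def using g by (simp add: y_def)
    then show "z \<in> f ` A0" using g by blast
  qed
  have cardle: "card (?B A0) \<le> w"
    using card_mono[OF finite_imageI[OF finA0] Bsub] card_image_le[OF finA0, of f] A0(2) by linarith
  have "A0 \<noteq> {}"
  proof
    assume e: "A0 = {}"
    have nm: "\<forall>s. \<not> ?fm {} s" unfolding fat_move_def by blast
    have se: "?Seg = {}" by (rule reach_empty[OF A0(3) e nm])
    obtain h where h: "h \<in> H" using F(2) by blast
    have "Inr (orb \<alpha> h) \<in> ?Seg" using h unfolding fvg_segments_def map_edges_def by blast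
    then show False using se by simp
  qed
  then obtain s where s: "s \<in> A0" by blast
  obtain y where y0: "y \<in> H" "s = Inr (orb \<alpha> y)" using bspec[OF A0r s] by blast
  have y2: "Inr (orb \<alpha> y) \<in> A0" using s y0(2) by simp
  have yB: "?st y \<in> ?B A0" by (rule Bset_Inr[OF y0(1) y2 orb_self])
  have Bne: "?B A0 \<noteq> {}" using yB by (rule ne_setI)
  have Bst: "?B A \<subseteq> strands H \<sigma> \<alpha> Ov" for A
  proof
    fix z assume "z \<in> ?B A"
    then obtain g where g: "z = ?st g" "g \<in> H" by (rule Bset_E)
    show "z \<in> strands H \<sigma> \<alpha> Ov" unfolding strands_def by (rule image_eqI[of _ "strand H \<sigma> \<alpha> Ov", OF g])
  qed
  have BSeg: "?B ?Seg = strands H \<sigma> \<alpha> Ov"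
  proof
    show "strands H \<sigma> \<alpha> Ov \<subseteq> ?B ?Seg"
    proof
      fix z assume "z \<in> strands H \<sigma> \<alpha> Ov"
      then obtain h where h: "h \<in> H" "z = ?st h" unfolding strands_def by (rule imageE)
      have "Inr (orb \<alpha> h) \<in> ?Seg" using h unfolding fvg_segments_def map_edges_def by blast
      then show "z \<in> ?B ?Seg" using Bset_Inr[OF h(1) _ orb_self] h(2) by blast
    qed
  qed (rule Bst)
  have r0: "reach (diagram_move H \<sigma> \<alpha> Ov) (?B A0) (?B ?Seg)"
    by (rule main[OF assms(1) A0(3)])
  have r: "reach (diagram_move H \<sigma> \<alpha> Ov) (?B A0) (strands H \<sigma> \<alpha> Ov)"
    using r0 unfolding BSeg .
  have "diagram_colorable H \<sigma> \<alpha> Ov (card (?B A0))"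
    unfolding diagram_colorable_def
    using Bst[of A0] Bne r by blast
  then have "wirtinger_diagram H \<sigma> \<alpha> Ov \<le> card (?B A0)"
    unfolding wirtinger_diagram_def by (rule Least_le)
  then show ?thesis using cardle w_def by simp
qed

end
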